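(* Let $n\ge2$, $\alpha\in(-n,0)$ and let $\phi$ be a Young function. (i) If $\underline\Lambda_\phi(\alpha)<\infty$, then $$\phi(xs)\le 2^{2n}\underline\Lambda_\phi(\alpha)\,\phi(2^{1-\alpha}x)\,s^{n/(1-\alpha)}\quad\forall\,0<s\le1,\ x>0.$$ (ii) If $\overline\Lambda_\phi(\alpha)<\infty$, then for every $x>0$, $\phi(xs^{-\alpha})s^{-n}\to0$ as $s\to\infty$, and $$\phi(xs)\le 2^{3n}\overline\Lambda_\phi(\alpha)\,\phi(x)\,s^{-n/\alpha}\quad\forall\,s\ge1,\ x>0.$$
   Context: A Young function is $\phi\in C([0,\infty))$, convex, with $\phi(0)=0$, $\phi(t)>0$ for $t>0$, $\lim_{t\to\infty}\phi(t)=\infty$. $\underline\Lambda_\phi(\alpha):=\sup_{x>0}\int_0^1\frac{\phi(t^{1-\alpha}x)}{\phi(x)}\frac{dt}{t^{n+1}}$, $\overline\Lambda_\phi(\alpha):=\sup_{x>0}\int_1^\infty\frac{\phi(t^{-\alpha}x)}{\phi(x)}\frac{dt}{t^{n+1}}$. *)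

theory Defs
  imports "HOL-Analysis.Analysis"
begin

definition young_function :: "(real \<Rightarrow> real) \<Rightarrow> bool" where
  "young_function \<phi> \<longleftrightarrow>
     continuous_on {0..} \<phi> \<and> convex_on {0..} \<phi> \<and> \<phi> 0 = 0 \<and>
     (\<forall>t>0. \<phi> t > 0) \<and> filterlim \<phi> at_top at_top"

definition Lambda_lower :: "nat \<Rightarrow> (real \<Rightarrow> real) \<Rightarrow> real \<Rightarrow> ennreal" where
  "Lambda_lower n \<phi> \<alpha> = (SUP x\<in>{0<..}.
      \<integral>\<^sup>+ t\<in>{0<..1}. ennreal (\<phi> (t powr (1 - \<alpha>) * x) / \<phi> x / t ^ (n + 1)) \<partial>lborel)"

definition Lambda_upper :: "nat \<Rightarrow> (real \<Rightarrow> real) \<Rightarrow> real \<Rightarrow> ennreal" where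
  "Lambda_upper n \<phi> \<alpha> = (SUP x\<in>{0<..}.
      \<integral>\<^sup>+ t\<in>{1..}. ennreal (\<phi> (t powr (- \<alpha>) * x) / \<phi> x / t ^ (n + 1)) \<partial>lborel)"

end

theory Submission
  imports Defs
begin

lemma young_mono:
  assumes "young_function \<phi>" "0 \<le> a" "a \<le> b"
  shows "\<phi> a \<le> \<phi> b"
proof (cases "b = 0")
  case True then show ?thesis using assms by simp
next
  case False
  then have b: "b > 0" using assms by simp
  have cv: "convex_on {0..} \<phi>" and z: "\<phi> 0 = 0" and pos: "\<phi> b > 0"
    using assms b unfolding young_function_def by auto
  have "\<phi> ((1 - a/b) *\<^sub>R 0 + (a/b) *\<^sub>R b) \<le> (1 - a/b) * \<phi> 0 + (a/b) * \<phi> b"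
    by (rule convex_onD[OF cv]) (use assms b in auto)
  then have "\<phi> a \<le> (a/b) * \<phi> b" using b z by simp
  also have "\<dots> \<le> \<phi> b"
  proof -
    have "a * \<phi> b \<le> b * \<phi> b" using pos assms by (intro mult_right_mono) auto
    then show ?thesis using b by (simp add: field_simps)
  qed
  finally show ?thesis .
qed

lemma int_lower:
  fixes a b c :: real
  assumes "{a..b} \<subseteq> A" "a \<le> b" "0 \<le> c" "\<And>t. t \<in> {a..b} \<Longrightarrow> c \<le> F t"
  shows "ennreal (c * (b - a)) \<le> (\<integral>\<^sup>+ t\<in>A. ennreal (F t) \<partial>lborel)"
proof -
  have "(\<integral>\<^sup>+ t. ennreal c * indicator {a..b} t \<partial>lborel) = ennreal c * ennreal (b - a)"
    using assms by (simp add: nn_integral_cmult_indicator)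
  also have "\<dots> = ennreal (c * (b - a))" using assms by (simp add: ennreal_mult)
  finally have eq: "(\<integral>\<^sup>+ t. ennreal c * indicator {a..b} t \<partial>lborel) = ennreal (c * (b - a))" .
  have "(\<integral>\<^sup>+ t. ennreal c * indicator {a..b} t \<partial>lborel) \<le> (\<integral>\<^sup>+ t\<in>A. ennreal (F t) \<partial>lborel)"
    apply (rule nn_integral_mono)
    using assms by (auto simp: indicator_def ennreal_leI)
  then show ?thesis using eq by simp
qed

lemma enn_le_real:
  assumes "ennreal u \<le> L" "L < \<infinity>"
  shows "u \<le> enn2real L"
proof (cases "u \<ge> 0")
  case True
  then show ?thesis using assms
    using enn2real_mono[OF assms(1)] by (simp add: top.not_eq_extremum)
next
  case False then show ?thesis using enn2real_nonneg[of L] by linarith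
qed

lemma aux_cancel: "(b::real) \<noteq> 0 \<Longrightarrow> D \<noteq> 0 \<Longrightarrow> r \<noteq> 0 \<Longrightarrow> a / b / D * r * (b * (D / r)) = a"
  by (simp add: field_simps)

lemma powr_pow_aux: "0 < (s::real) \<Longrightarrow> (s powr p) ^ n = s powr (real n * p)"
  by (simp add: powr_realpow[symmetric] powr_powr mult.commute)

lemma part1:
  fixes n :: nat and \<alpha> :: real and \<phi> :: "real \<Rightarrow> real"
  assumes Y: "young_function \<phi>" and n1: "n \<ge> 1" and a: "\<alpha> < 0" and L: "Lambda_lower n \<phi> \<alpha> < \<infinity>"
    and s: "0 < s" "s \<le> 1" and x: "0 < x"
  shows "\<phi> (x * s) \<le> 2 ^ (2 * n) * enn2real (Lambda_lower n \<phi> \<alpha>)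
                 * \<phi> (2 powr (1 - \<alpha>) * x) * s powr (real n / (1 - \<alpha>))"
proof -
  define \<Lambda> where "\<Lambda> = enn2real (Lambda_lower n \<phi> \<alpha>)"
  have \<Lambda>0: "\<Lambda> \<ge> 0" unfolding \<Lambda>_def by simp
  have pos: "\<And>t. t > 0 \<Longrightarrow> \<phi> t > 0" using Y unfolding young_function_def by auto
  define y where "y = 2 powr (1 - \<alpha>) * x"
  have y: "y > 0" unfolding y_def using x by simp
  define q where "q = s powr (1 / (1 - \<alpha>))"
  have q: "q > 0" "q \<le> 1" unfolding q_def using s a by (auto intro: powr_le1)
  define r where "r = q / 2"
  have r: "r > 0" "2 * r \<le> 1" unfolding r_def using q by auto
  have qp: "q powr (1 - \<alpha>) = s" unfolding q_def using s a by (simp add: powr_powr)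
  have rp: "r powr (1 - \<alpha>) * y = x * s"
    unfolding r_def y_def using q a qp by (simp add: powr_divide)
  define c where "c = \<phi> (x * s) / \<phi> y / (2 * r) ^ (n + 1)"
  have c0: "c \<ge> 0" unfolding c_def using pos[of "x * s"] pos[OF y] x s r by simp
  have "ennreal (c * (2 * r - r)) \<le>
     (\<integral>\<^sup>+ t\<in>{0<..1}. ennreal (\<phi> (t powr (1 - \<alpha>) * y) / \<phi> y / t ^ (n + 1)) \<partial>lborel)"
  proof (rule int_lower)
    show "{r..2 * r} \<subseteq> {0<..1}" using r by auto
    fix t assume t: "t \<in> {r..2 * r}"
    have "r powr (1 - \<alpha>) \<le> t powr (1 - \<alpha>)" using t r a by (intro powr_mono2) auto
    from mult_right_mono[OF this, of y] have "x * s \<le> t powr (1 - \<alpha>) * y" using rp y by simp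
    then have A: "\<phi> (x * s) \<le> \<phi> (t powr (1 - \<alpha>) * y)" using x s by (intro young_mono[OF Y]) auto
    have B: "t ^ (n + 1) \<le> (2 * r) ^ (n + 1)" using t r by (intro power_mono) auto
    have "c \<le> \<phi> (x * s) / \<phi> y / t ^ (n + 1)"
      unfolding c_def
    proof (rule divide_left_mono[OF B])
      show "0 \<le> \<phi> (x * s) / \<phi> y" using pos[of "x * s"] pos[OF y] x s by simp
      show "0 < (2 * r) ^ (n + 1) * t ^ (n + 1)" using t r by simp
    qed
    also have "\<dots> \<le> \<phi> (t powr (1 - \<alpha>) * y) / \<phi> y / t ^ (n + 1)"
      using A t r pos[OF y] by (intro divide_right_mono) auto
    finally show "c \<le> \<phi> (t powr (1 - \<alpha>) * y) / \<phi> y / t ^ (n + 1)" .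
  qed (use r c0 in auto)
  also have "\<dots> \<le> Lambda_lower n \<phi> \<alpha>"
    unfolding Lambda_lower_def by (rule SUP_upper) (use y in simp)
  finally have "ennreal (c * (2 * r - r)) \<le> Lambda_lower n \<phi> \<alpha>" .
  then have "c * (2 * r - r) \<le> \<Lambda>" unfolding \<Lambda>_def by (rule enn_le_real[OF _ L])
  then have "c * r \<le> \<Lambda>" by simp
  then have "\<phi> (x * s) / \<phi> y / (2 * r) ^ (n + 1) * r \<le> \<Lambda>" unfolding c_def .
  then have "\<phi> (x * s) / \<phi> y / (2 * r) ^ (n + 1) * r * (\<phi> y * ((2 * r) ^ (n + 1) / r))
     \<le> \<Lambda> * (\<phi> y * ((2 * r) ^ (n + 1) / r))"
    using r pos[OF y] by (intro mult_right_mono) auto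
  moreover have "\<phi> (x * s) / \<phi> y / (2 * r) ^ (n + 1) * r * (\<phi> y * ((2 * r) ^ (n + 1) / r))
     = \<phi> (x * s)" using r pos[OF y] by (intro aux_cancel) auto
  ultimately have "\<phi> (x * s) \<le> \<Lambda> * \<phi> y * ((2 * r) ^ (n + 1) / r)" by (simp add: mult.assoc)
  also have "(2 * r) ^ (n + 1) / r = 2 * q ^ n"
  proof -
    have "(2 * r) ^ (n + 1) / r = 2 * (2 * r) ^ n" using r by simp
    then show ?thesis unfolding r_def by simp
  qed
  also have "q ^ n = s powr (real n / (1 - \<alpha>))"
    unfolding q_def using s by (simp add: powr_pow_aux)
  finally have "\<phi> (x * s) \<le> 2 * (\<Lambda> * \<phi> y * s powr (real n / (1 - \<alpha>)))" by (simp add: mult_ac)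
  also have "\<dots> \<le> 2 ^ (2 * n) * (\<Lambda> * \<phi> y * s powr (real n / (1 - \<alpha>)))"
  proof (rule mult_right_mono)
    show "0 \<le> \<Lambda> * \<phi> y * s powr (real n / (1 - \<alpha>))" using \<Lambda>0 pos[OF y] by simp
    have "(2::real) ^ 1 \<le> 2 ^ (2 * n)" using n1 by (intro power_increasing) auto
    then show "(2::real) \<le> 2 ^ (2 * n)" by simp
  qed
  finally show ?thesis unfolding \<Lambda>_def y_def by (simp only: mult.assoc)
qed

lemma part2_bound:
  fixes n :: nat and \<alpha> :: real and \<phi> :: "real \<Rightarrow> real"
  assumes Y: "young_function \<phi>" and n1: "n \<ge> 1" and a: "\<alpha> < 0" and L: "Lambda_upper n \<phi> \<alpha> < \<infinity>"
    and s: "1 \<le> s" and x: "0 < x"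
  shows "\<phi> (x * s) \<le> 2 ^ (3 * n) * enn2real (Lambda_upper n \<phi> \<alpha>) * \<phi> x * s powr (- real n / \<alpha>)"
proof -
  define \<Lambda> where "\<Lambda> = enn2real (Lambda_upper n \<phi> \<alpha>)"
  have \<Lambda>0: "\<Lambda> \<ge> 0" unfolding \<Lambda>_def by simp
  have pos: "\<And>t. t > 0 \<Longrightarrow> \<phi> t > 0" using Y unfolding young_function_def by auto
  define r where "r = s powr (- 1 / \<alpha>)"
  have r: "r \<ge> 1" unfolding r_def using s a by (intro ge_one_powr_ge_zero) (auto simp: divide_simps)
  have rp: "r powr (- \<alpha>) = s" unfolding r_def using s a by (simp add: powr_powr)
  define c where "c = \<phi> (x * s) / \<phi> x / (2 * r) ^ (n + 1)"
  have c0: "c \<ge> 0" unfolding c_def using pos[of "x * s"] pos[OF x] x s r by simp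
  have "ennreal (c * (2 * r - r)) \<le>
     (\<integral>\<^sup>+ t\<in>{1..}. ennreal (\<phi> (t powr (- \<alpha>) * x) / \<phi> x / t ^ (n + 1)) \<partial>lborel)"
  proof (rule int_lower)
    show "{r..2 * r} \<subseteq> {1..}" using r by auto
    fix t assume t: "t \<in> {r..2 * r}"
    have "r powr (- \<alpha>) \<le> t powr (- \<alpha>)" using t r a by (intro powr_mono2) auto
    from mult_right_mono[OF this, of x] have "x * s \<le> t powr (- \<alpha>) * x" using rp x by (simp add: mult.commute)
    then have A: "\<phi> (x * s) \<le> \<phi> (t powr (- \<alpha>) * x)" using x s by (intro young_mono[OF Y]) auto
    have B: "t ^ (n + 1) \<le> (2 * r) ^ (n + 1)" using t r by (intro power_mono) auto
    have "c \<le> \<phi> (x * s) / \<phi> x / t ^ (n + 1)"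
      unfolding c_def
    proof (rule divide_left_mono[OF B])
      show "0 \<le> \<phi> (x * s) / \<phi> x" using pos[of "x * s"] pos[OF x] x s by simp
      show "0 < (2 * r) ^ (n + 1) * t ^ (n + 1)" using t r by simp
    qed
    also have "\<dots> \<le> \<phi> (t powr (- \<alpha>) * x) / \<phi> x / t ^ (n + 1)"
      using A t r pos[OF x] by (intro divide_right_mono) auto
    finally show "c \<le> \<phi> (t powr (- \<alpha>) * x) / \<phi> x / t ^ (n + 1)" .
  qed (use r c0 in auto)
  also have "\<dots> \<le> Lambda_upper n \<phi> \<alpha>"
    unfolding Lambda_upper_def by (rule SUP_upper) (use x in simp)
  finally have "ennreal (c * (2 * r - r)) \<le> Lambda_upper n \<phi> \<alpha>" .
  then have "c * (2 * r - r) \<le> \<Lambda>" unfolding \<Lambda>_def by (rule enn_le_real[OF _ L])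
  then have "c * r \<le> \<Lambda>" by simp
  then have "\<phi> (x * s) / \<phi> x / (2 * r) ^ (n + 1) * r \<le> \<Lambda>" unfolding c_def .
  then have "\<phi> (x * s) / \<phi> x / (2 * r) ^ (n + 1) * r * (\<phi> x * ((2 * r) ^ (n + 1) / r))
     \<le> \<Lambda> * (\<phi> x * ((2 * r) ^ (n + 1) / r))"
    using r pos[OF x] by (intro mult_right_mono) auto
  moreover have "\<phi> (x * s) / \<phi> x / (2 * r) ^ (n + 1) * r * (\<phi> x * ((2 * r) ^ (n + 1) / r))
     = \<phi> (x * s)" using r pos[OF x] by (intro aux_cancel) auto
  ultimately have "\<phi> (x * s) \<le> \<Lambda> * \<phi> x * ((2 * r) ^ (n + 1) / r)" by (simp add: mult.assoc)
  also have "(2 * r) ^ (n + 1) / r = 2 ^ (n + 1) * r ^ n"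
  proof -
    have "(2 * r) ^ (n + 1) / r = 2 * (2 * r) ^ n" using r by simp
    then show ?thesis by (simp add: power_mult_distrib)
  qed
  also have "r ^ n = s powr (- real n / \<alpha>)"
    unfolding r_def using s by (simp add: powr_pow_aux)
  finally have "\<phi> (x * s) \<le> 2 ^ (n + 1) * (\<Lambda> * \<phi> x * s powr (- real n / \<alpha>))" by (simp add: mult_ac)
  also have "\<dots> \<le> 2 ^ (3 * n) * (\<Lambda> * \<phi> x * s powr (- real n / \<alpha>))"
  proof (rule mult_right_mono)
    show "0 \<le> \<Lambda> * \<phi> x * s powr (- real n / \<alpha>)" using \<Lambda>0 pos[OF x] by simp
    show "(2::real) ^ (n + 1) \<le> 2 ^ (3 * n)" using n1 by (intro power_increasing) auto
  qed
  finally show ?thesis unfolding \<Lambda>_def by (simp only: mult.assoc)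
qed

lemma part2_lim:
  fixes n :: nat and \<alpha> :: real and \<phi> :: "real \<Rightarrow> real"
  assumes Y: "young_function \<phi>" and a: "\<alpha> < 0" and L: "Lambda_upper n \<phi> \<alpha> < \<infinity>"
    and x: "0 < x"
  shows "((\<lambda>s. \<phi> (x * s powr (- \<alpha>)) * s powr (- real n)) \<longlongrightarrow> 0) at_top"
proof (rule ccontr)
  define f where "f t = ennreal (\<phi> (t powr (- \<alpha>) * x) / \<phi> x / t ^ (n + 1))" for t
  define g where "g s = \<phi> (x * s powr (- \<alpha>)) * s powr (- real n)" for s
  define d where "d s = \<phi> (x * s powr (- \<alpha>)) / \<phi> x / (2 * s) ^ (n + 1)" for s
  have pos: "\<And>t. t > 0 \<Longrightarrow> \<phi> t > 0" using Y unfolding young_function_def by auto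
  have phi0: "\<phi> 0 = 0" using Y unfolding young_function_def by auto
  have nonneg: "\<phi> t \<ge> 0" if "t \<ge> 0" for t
  proof (cases "t = 0")
    case True then show ?thesis using phi0 by simp
  next
    case False then show ?thesis using pos[of t] that by simp
  qed
  have g0: "g s \<ge> 0" for s unfolding g_def using nonneg x by simp
  assume "\<not> ((\<lambda>s. \<phi> (x * s powr (- \<alpha>)) * s powr (- real n)) \<longlongrightarrow> 0) at_top"
  then have "\<not> (g \<longlongrightarrow> 0) at_top" unfolding g_def[abs_def] .
  then obtain \<epsilon> where e: "\<epsilon> > 0" "\<not> eventually (\<lambda>s. dist (g s) 0 < \<epsilon>) at_top"
    unfolding tendsto_iff by auto
  have freq: "\<exists>s\<ge>M. \<epsilon> \<le> g s" for M
  proof (rule ccontr)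
    assume "\<not> (\<exists>s\<ge>M. \<epsilon> \<le> g s)"
    then have "\<forall>s\<ge>M. dist (g s) 0 < \<epsilon>" using g0 by (auto simp: dist_real_def)
    then have "eventually (\<lambda>s. dist (g s) 0 < \<epsilon>) at_top" unfolding eventually_at_top_linorder by blast
    with e show False by simp
  qed
  define c where "c = \<epsilon> / (\<phi> x * 2 ^ (n + 1))"
  have c: "c > 0" unfolding c_def using e pos[OF x] by simp
  have ds: "c \<le> d s * s" if "s \<ge> 1" "\<epsilon> \<le> g s" for s
  proof -
    have "d s * s = g s / (\<phi> x * 2 ^ (n + 1))"
      unfolding d_def g_def using that pos[OF x]
      by (simp add: powr_minus powr_realpow field_simps)
    then show ?thesis unfolding c_def using that pos[OF x] by (simp add: divide_right_mono)
  qed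
  have dle: "ennreal (d s) \<le> f t" if "s \<ge> 1" "t \<in> {s..2 * s}" for s t
  proof -
    have "s powr (- \<alpha>) \<le> t powr (- \<alpha>)" using that a by (intro powr_mono2) auto
    from mult_left_mono[OF this, of x] have "x * s powr (- \<alpha>) \<le> t powr (- \<alpha>) * x" using x by (simp add: mult.commute)
    then have A: "\<phi> (x * s powr (- \<alpha>)) \<le> \<phi> (t powr (- \<alpha>) * x)" using x by (intro young_mono[OF Y]) auto
    have B: "t ^ (n + 1) \<le> (2 * s) ^ (n + 1)" using that by (intro power_mono) auto
    have "d s \<le> \<phi> (x * s powr (- \<alpha>)) / \<phi> x / t ^ (n + 1)"
      unfolding d_def
    proof (rule divide_left_mono[OF B])
      show "0 \<le> \<phi> (x * s powr (- \<alpha>)) / \<phi> x" using nonneg pos[OF x] x by simp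
      show "0 < (2 * s) ^ (n + 1) * t ^ (n + 1)" using that by simp
    qed
    also have "\<dots> \<le> \<phi> (t powr (- \<alpha>) * x) / \<phi> x / t ^ (n + 1)"
      using A that pos[OF x] by (intro divide_right_mono) auto
    finally show ?thesis unfolding f_def by (rule ennreal_leI)
  qed
  have claim: "\<exists>M\<ge>1. \<exists>h. h \<in> borel_measurable lborel \<and> (\<forall>t. h t \<le> f t * indicator {1..M} t)
      \<and> ennreal (real N * c) \<le> integral\<^sup>N lborel h" for N
  proof (induction N)
    case 0
    show ?case by (rule exI[of _ 1], rule conjI, simp, rule exI[of _ "\<lambda>_. 0"]) auto
  next
    case (Suc N)
    then obtain M h where M: "M \<ge> 1" and hm: "h \<in> borel_measurable lborel"
      and hle: "\<forall>t. h t \<le> f t * indicator {1..M} t" and hi: "ennreal (real N * c) \<le> integral\<^sup>N lborel h"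
      by blast
    obtain s where s: "s \<ge> M + 1" "\<epsilon> \<le> g s" using freq by blast
    have s1: "s \<ge> 1" using s M by simp
    define h' where "h' t = h t + ennreal (d s) * indicator {s..2 * s} t" for t
    have h'm: "h' \<in> borel_measurable lborel" unfolding h'_def[abs_def] using hm by measurable
    have h'le: "h' t \<le> f t * indicator {1..2 * s} t" for t
    proof (cases "t \<in> {s..2 * s}")
      case True
      then have "t \<notin> {1..M}" using s by auto
      then have "h t = 0" using hle[rule_format, of t] by simp
      moreover have "t \<in> {1..2 * s}" using True s1 by auto
      ultimately show ?thesis unfolding h'_def using True dle[OF s1 True] by simp
    next
      case False
      have "h t \<le> f t * indicator {1..M} t" using hle by blast
      also have "\<dots> \<le> f t * indicator {1..2 * s} t"
        using s by (intro mult_left_mono) (auto simp: indicator_def)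
      finally show ?thesis unfolding h'_def using False by simp
    qed
    have "integral\<^sup>N lborel h' = integral\<^sup>N lborel h + ennreal (d s) * emeasure lborel {s..2 * s}"
      unfolding h'_def using hm by (subst nn_integral_add) (auto simp: nn_integral_cmult_indicator)
    also have "ennreal (d s) * emeasure lborel {s..2 * s} = ennreal (d s * s)"
    proof -
      have "\<phi> (x * s powr (- \<alpha>)) \<ge> 0" using x by (intro nonneg) simp
      then have "d s \<ge> 0" unfolding d_def using pos[OF x] s1 by simp
      moreover have "emeasure lborel {s..2 * s} = ennreal s" using s1 by simp
      ultimately show ?thesis using ennreal_mult[of "d s" s] s1 by simp
    qed
    finally have eq: "integral\<^sup>N lborel h' = integral\<^sup>N lborel h + ennreal (d s * s)" .
    have sc: "real (Suc N) * c = real N * c + c" by (simp add: algebra_simps)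
    have "ennreal (real (Suc N) * c) = ennreal (real N * c) + ennreal c"
      unfolding sc by (rule ennreal_plus) (use c in simp_all)
    also have "\<dots> \<le> integral\<^sup>N lborel h + ennreal (d s * s)"
      using hi ds[OF s1 s(2)] by (intro add_mono ennreal_leI) auto
    finally have "ennreal (real (Suc N) * c) \<le> integral\<^sup>N lborel h'" using eq by simp
    then show ?case using h'm h'le s1 by (intro exI[of _ "2 * s"]) auto
  qed
  obtain N where N: "enn2real (Lambda_upper n \<phi> \<alpha>) / c < real N" using reals_Archimedean2 by blast
  obtain M h where hle: "\<forall>t. h t \<le> f t * indicator {1..M} t"
      and hi: "ennreal (real N * c) \<le> integral\<^sup>N lborel h" using claim[of N] by blast
  have "integral\<^sup>N lborel h \<le> (\<integral>\<^sup>+ t\<in>{1..}. f t \<partial>lborel)"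
  proof (rule nn_integral_mono)
    fix t
    have "h t \<le> f t * indicator {1..M} t" using hle by blast
    also have "\<dots> \<le> f t * indicator {1..} t" by (intro mult_left_mono) (auto simp: indicator_def)
    finally show "h t \<le> f t * indicator {1..} t" .
  qed
  also have "\<dots> \<le> Lambda_upper n \<phi> \<alpha>"
    unfolding Lambda_upper_def f_def by (rule SUP_upper) (use x in simp)
  finally have "real N * c \<le> enn2real (Lambda_upper n \<phi> \<alpha>)" using hi by (intro enn_le_real[OF _ L]) auto
  with N c show False by (simp add: field_simps)
qed

theorem lemma2p1:
  fixes n :: nat and \<alpha> :: real and \<phi> :: "real \<Rightarrow> real"
  assumes "n \<ge> 2" and "- real n < \<alpha>" and "\<alpha> < 0" and "young_function \<phi>"
  shows "(Lambda_lower n \<phi> \<alpha> < \<infinity> \<longrightarrow>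
           (\<forall>s x. 0 < s \<and> s \<le> 1 \<and> 0 < x \<longrightarrow>
              \<phi> (x * s) \<le> 2 ^ (2 * n) * enn2real (Lambda_lower n \<phi> \<alpha>)
                 * \<phi> (2 powr (1 - \<alpha>) * x) * s powr (real n / (1 - \<alpha>))))
       \<and> (Lambda_upper n \<phi> \<alpha> < \<infinity> \<longrightarrow>
           (\<forall>x>0. ((\<lambda>s. \<phi> (x * s powr (- \<alpha>)) * s powr (- real n)) \<longlongrightarrow> 0) at_top) \<and>
           (\<forall>s x. 1 \<le> s \<and> 0 < x \<longrightarrow>
              \<phi> (x * s) \<le> 2 ^ (3 * n) * enn2real (Lambda_upper n \<phi> \<alpha>)
                 * \<phi> x * s powr (- real n / \<alpha>)))"
proof -
  have n1: "n \<ge> 1" using assms(1) by simp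
  show ?thesis
    using part1[OF assms(4) n1 assms(3)] part2_bound[OF assms(4) n1 assms(3)]
      part2_lim[OF assms(4) assms(3)] by blast
qed

end
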